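(* Let $d$ be a positive integer and let $\mu,\nu,\rho$ be $d$-partitions with $\mu\prec\rho\succ\nu$. Then there exist a unique $d$-partition $\kappa$ and a unique nonnegative integer $m$ such that the cell with entry $m$ and bottom-left, top-left, bottom-right, top-right corners $\kappa,\mu,\nu,\rho$ satisfies the $d$-RSK local rule.
   Context: Partitions: finite weakly decreasing sequences of positive integers, $\lambda_i=0$ for $i>\ell(\lambda)$; $d$-partitions have $\ell\le d$; $\alpha\prec\beta$ (also $\beta\succ\alpha$) means $\beta_1\ge\alpha_1\ge\beta_2\ge\alpha_2\ge\cdots$. The $d$-RSK local rule for a cell with entry $m$ and corners $\kappa$ (bottom-left), $\mu$ (top-left), $\nu$ (bottom-right), $\rho$ (top-right) requires: all four are $d$-partitions, $\mu\succ\kappa\prec\nu$, $\mu\prec\rho\succ\nu$, $m=0$ or $\kappa_d=0$, $\rho_1+\kappa_d=m+\min(\mu_d,\nu_d)+\max(\mu_1,\nu_1)$, and $\rho_i+\kappa_{i-1}=\min(\mu_{i-1},\nu_{i-1})+\max(\mu_i,\nu_i)$ for $2\le i\le d$. *)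

theory Defs
  imports Main
begin

definition is_partition :: "nat list \<Rightarrow> bool" where
  "is_partition la \<longleftrightarrow> sorted_wrt (\<ge>) la \<and> 0 \<notin> set la"

text \<open>The i-th part (1-indexed), zero for i = 0 or i > length.\<close>
definition part :: "nat list \<Rightarrow> nat \<Rightarrow> nat" where
  "part la i = (if 1 \<le> i \<and> i \<le> length la then la ! (i - 1) else 0)"

definition d_partition :: "nat \<Rightarrow> nat list \<Rightarrow> bool" where
  "d_partition d la \<longleftrightarrow> is_partition la \<and> length la \<le> d"

text \<open>interlaces al be means al \<prec> be:  be_1 >= al_1 >= be_2 >= al_2 >= ...\<close>
definition interlaces :: "nat list \<Rightarrow> nat list \<Rightarrow> bool" where
  "interlaces al be \<longleftrightarrow> (\<forall>i\<ge>1. part al i \<le> part be i \<and> part be (i + 1) \<le> part al i)"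

text \<open>d-RSK local rule for a cell with entry m and corners
  ka (bottom-left), mu (top-left), nu (bottom-right), rho (top-right).\<close>
definition rsk_local ::
  "nat \<Rightarrow> nat \<Rightarrow> nat list \<Rightarrow> nat list \<Rightarrow> nat list \<Rightarrow> nat list \<Rightarrow> bool" where
  "rsk_local d m ka mu nu rho \<longleftrightarrow>
     d_partition d ka \<and> d_partition d mu \<and> d_partition d nu \<and> d_partition d rho \<and>
     interlaces ka mu \<and> interlaces ka nu \<and>
     interlaces mu rho \<and> interlaces nu rho \<and>
     (m = 0 \<or> part ka d = 0) \<and>
     part rho 1 + part ka d = m + min (part mu d) (part nu d) + max (part mu 1) (part nu 1) \<and>
     (\<forall>i. 2 \<le> i \<and> i \<le> d \<longrightarrow>
        part rho i + part ka (i - 1) =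
          min (part mu (i - 1)) (part nu (i - 1)) + max (part mu i) (part nu i))"

end

theory Submission
  imports Defs
begin

lemma part_0[simp]: "part la 0 = 0" by (simp add: part_def)

lemma part_big: "length la < i \<Longrightarrow> part la i = 0" by (simp add: part_def)

lemma part_pos: "is_partition la \<Longrightarrow> 1 \<le> i \<Longrightarrow> i \<le> length la \<Longrightarrow> part la i > 0"
proof -
  assume a: "is_partition la" "1 \<le> i" "i \<le> length la"
  then have "la ! (i - 1) \<in> set la" by (intro nth_mem) simp
  then have "la ! (i - 1) \<noteq> 0" using a(1) unfolding is_partition_def by metis
  then show ?thesis using a unfolding part_def by simp
qed

lemma part_eq:
  assumes "is_partition a" "is_partition b" "\<And>i. part a i = part b i"
  shows "a = b"
proof -
  have len: "length a = length b"
  proof (rule ccontr)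
    assume "length a \<noteq> length b"
    then consider "length a < length b" | "length b < length a" by linarith
    then show False
    proof cases
      case 1
      then have "part b (length b) > 0" using part_pos[OF assms(2)] by simp
      moreover have "part a (length b) = 0" using part_big 1 by simp
      ultimately show False using assms(3) by simp
    next
      case 2
      then have "part a (length a) > 0" using part_pos[OF assms(1)] by simp
      moreover have "part b (length a) = 0" using part_big 2 by simp
      ultimately show False using assms(3) by simp
    qed
  qed
  show ?thesis
  proof (rule nth_equalityI[OF len])
    fix k assume "k < length a"
    then show "a ! k = b ! k" using assms(3)[of "Suc k"] len by (simp add: part_def)
  qed
qed

lemma dec_chain:
  assumes "\<And>i. 1 \<le> i \<Longrightarrow> g (Suc i) \<le> (g i :: nat)" "1 \<le> i" "i \<le> j"
  shows "g j \<le> g i"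
  using assms(3)
proof (induction j rule: dec_induct)
  case base then show ?case by simp
next
  case (step j) then show ?case using assms(1)[of j] assms(2) by simp
qed

lemma mk_list:
  fixes f :: "nat \<Rightarrow> nat"
  assumes f0: "f 0 = 0" and fbig: "\<And>i. d < i \<Longrightarrow> f i = 0"
    and fdec: "\<And>i j. 1 \<le> i \<Longrightarrow> i \<le> j \<Longrightarrow> f j \<le> f i"
  shows "\<exists>la. d_partition d la \<and> (\<forall>i. part la i = f i)"
proof -
  define P where "P i \<longleftrightarrow> 1 \<le> i \<and> f i = 0" for i
  have Pd: "P (Suc d)" using fbig P_def by simp
  define n where "n = (LEAST i. P i) - 1"
  have PL: "P (LEAST i. P i)" using LeastI[of P, OF Pd] .
  have Lle: "(LEAST i. P i) \<le> Suc d" using Least_le[of P, OF Pd] .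
  have L1: "(LEAST i. P i) \<ge> 1" using PL P_def by simp
  have nd: "n \<le> d" using Lle n_def by simp
  have pos: "f i > 0" if "1 \<le> i" "i \<le> n" for i
  proof -
    have "i < (LEAST i. P i)" using that n_def L1 by simp
    then have "\<not> P i" using not_less_Least by blast
    then show ?thesis using that P_def by simp
  qed
  have zero: "f i = 0" if "n < i" for i
  proof -
    have "(LEAST i. P i) \<le> i" using that n_def L1 by simp
    then have "f i \<le> f (LEAST i. P i)" using fdec L1 by blast
    then show ?thesis using PL P_def by simp
  qed
  define la where "la = map f [1..<n+1]"
  have len: "length la = n" by (simp add: la_def)
  have nth: "la ! k = f (Suc k)" if "k < n" for k using that by (simp add: la_def del: upt_Suc)
  have "sorted_wrt (\<ge>) la"
    unfolding sorted_wrt_iff_nth_less using len nth fdec by auto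
  moreover have "\<forall>x\<in>set la. x > 0"
    unfolding la_def using pos by (auto simp del: upt_Suc)
  then have "0 \<notin> set la" by blast
  moreover have "part la i = f i" for i
    using len nth pos zero f0 by (cases "i = 0") (auto simp: part_def)
  ultimately show ?thesis using nd len unfolding d_partition_def is_partition_def by blast
qed

theorem lemma6p2:
  fixes d :: nat and mu nu rho :: "nat list"
  assumes "d \<ge> 1"
    and "d_partition d mu" and "d_partition d nu" and "d_partition d rho"
    and "interlaces mu rho" and "interlaces nu rho"
  shows "\<exists>!(ka, m). rsk_local d m ka mu nu rho"
proof -
  define M where "M = part mu"
  define N where "N = part nu"
  define R where "R = part rho"
  have Mb: "M i = 0" if "d < i" for i
    using assms(2) that part_big unfolding M_def d_partition_def by (metis le_less_trans)
  have Nb: "N i = 0" if "d < i" for i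
    using assms(3) that part_big unfolding N_def d_partition_def by (metis le_less_trans)
  have MR: "M i \<le> R i" "R (Suc i) \<le> M i" if "1 \<le> i" for i
    using assms(5) that unfolding interlaces_def M_def R_def by auto
  have NR: "N i \<le> R i" "R (Suc i) \<le> N i" if "1 \<le> i" for i
    using assms(6) that unfolding interlaces_def N_def R_def by auto
  define S where "S = min (M d) (N d) + max (M 1) (N 1)"
  define K where "K j = (if j = 0 then 0 else if j < d then
      min (M j) (N j) + max (M (Suc j)) (N (Suc j)) - R (Suc j)
      else if j = d then S - R 1 else 0)" for j
  define m0 where "m0 = R 1 - S"
  have Kup: "K j \<le> min (M j) (N j)" for j
  proof -
    consider "j = 0" | "1 \<le> j" "j < d" | "j = d" | "d < j" by linarith
    then show ?thesis
    proof cases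
      case 2 then show ?thesis using MR(1)[of "Suc j"] NR(1)[of "Suc j"] unfolding K_def by auto
    next
      case 3 then show ?thesis using MR(1)[of 1] NR(1)[of 1] assms(1) unfolding K_def S_def by auto
    qed (auto simp: K_def)
  qed
  have Klow: "max (M (Suc j)) (N (Suc j)) \<le> K j" if "1 \<le> j" for j
  proof -
    consider "j < d" | "d \<le> j" by linarith
    then show ?thesis
    proof cases
      case 1 then show ?thesis using MR(2)[of j] NR(2)[of j] that unfolding K_def by auto
    next
      case 2 then show ?thesis using Mb[of "Suc j"] Nb[of "Suc j"] by simp
    qed
  qed
  have Kdec: "K j \<le> K i" if "1 \<le> i" "i \<le> j" for i j
  proof (rule dec_chain[OF _ that])
    fix i :: nat assume "1 \<le> i"
    then show "K (Suc i) \<le> K i" using Kup[of "Suc i"] Klow[of i] by linarith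
  qed
  obtain ka0 where ka0: "d_partition d ka0" "\<And>i. part ka0 i = K i"
    using mk_list[of K d] Kdec by (auto simp: K_def)
  have sol: "rsk_local d m0 ka0 mu nu rho"
  proof -
    have u1: "K i \<le> M i" "K i \<le> N i" for i using Kup[of i] by auto
    have u2: "M (Suc i) \<le> K i" "N (Suc i) \<le> K i" if "1 \<le> i" for i using Klow[OF that] by auto
    have i1: "interlaces ka0 mu" "interlaces ka0 nu"
      unfolding interlaces_def ka0(2) using u1 u2
      by (auto simp: M_def[symmetric] N_def[symmetric])
    have e1: "R 1 + K d = m0 + S" using assms(1) unfolding K_def m0_def by auto
    have e2: "R i + K (i - 1) = min (M (i - 1)) (N (i - 1)) + max (M i) (N i)"
      if "2 \<le> i" "i \<le> d" for i
    proof -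
      have "R i \<le> M (i - 1)" "R i \<le> N (i - 1)" using MR(2)[of "i-1"] NR(2)[of "i-1"] that by auto
      moreover have "K (i - 1) = min (M (i - 1)) (N (i - 1)) + max (M i) (N i) - R i"
        using that unfolding K_def by auto
      ultimately show ?thesis by linarith
    qed
    have e0: "m0 = 0 \<or> K d = 0" using assms(1) unfolding K_def m0_def by auto
    show ?thesis unfolding rsk_local_def ka0(2)
      using ka0(1) assms(2-6) i1 e0 e1 e2
      by (simp add: M_def[symmetric] N_def[symmetric] R_def[symmetric] S_def[symmetric]; simp add: S_def)
  qed
  have uniq: "ka = ka0 \<and> m = m0" if r: "rsk_local d m ka mu nu rho" for ka m
  proof -
    have dp: "d_partition d ka" using r unfolding rsk_local_def by simp
    have E1: "R 1 + part ka d = m + S" and E0: "m = 0 \<or> part ka d = 0"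
      and E2: "\<And>i. 2 \<le> i \<Longrightarrow> i \<le> d \<Longrightarrow> R i + part ka (i - 1) =
          min (M (i - 1)) (N (i - 1)) + max (M i) (N i)"
      using r unfolding rsk_local_def M_def N_def R_def S_def by auto
    have pk: "part ka j = K j" for j
    proof -
      consider "j = 0" | "1 \<le> j" "j < d" | "j = d" | "d < j" by linarith
      then show ?thesis
      proof cases
        case 2
        then have "R (Suc j) + part ka j = min (M j) (N j) + max (M (Suc j)) (N (Suc j))"
          using E2[of "Suc j"] by simp
        then show ?thesis using 2 unfolding K_def by simp
      next
        case 3 then show ?thesis using E1 E0 assms(1) unfolding K_def by auto
      next
        case 4 then show ?thesis using dp part_big[of ka j] unfolding K_def d_partition_def by simp
      qed (simp add: K_def)
    qed
    have "ka = ka0"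
      using part_eq[of ka ka0] dp ka0 pk unfolding d_partition_def by simp
    moreover have "m = m0"
      using E1 E0 pk[of d] assms(1) unfolding K_def m0_def by auto
    ultimately show ?thesis by simp
  qed
  show ?thesis
  proof (rule ex1I[of _ "(ka0, m0)"])
    show "case (ka0, m0) of (ka, m) \<Rightarrow> rsk_local d m ka mu nu rho" using sol by simp
  next
    fix p :: "nat list \<times> nat"
    assume "case p of (ka, m) \<Rightarrow> rsk_local d m ka mu nu rho"
    then show "p = (ka0, m0)" using uniq by (cases p) simp
  qed
qed

end
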